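(* Let $h \geq 1$ and $N \geq 1$ be integers. For all integers $d_1, \dots, d_N \in [0,h]$, the polygon $P(d_1, \dots, d_N)$ belongs to $\mathcal{P}_N$. Conversely, for every $P \in \mathcal{P}_N$ there exists a collection of integers $d_1, \dots, d_N \in [0,h]$, unique up to permutation, such that $P = P(d_1, \dots, d_N)$.
   Context: For integers $d_1, \dots, d_N$ between $0$ and $h$, the polygon $P(d_1,\dots,d_N)$ is the function on $[0,h]$ given by $P(d_1, \dots, d_N)(x) = \frac{1}{N} \sum_{i=1}^N \max(0, x + d_i - h)$. $\mathcal{P}_N$ denotes the set of convex polygons on $[0,h]$ starting at the origin (continuous convex piecewise linear functions $P$ on $[0,h]$ with $P(0)=0$) whose breakpoints have integral $x$-coordinates and whose slopes lie in $\frac{1}{N}\mathbb{Z} \cap [0,1]$. *)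

theory Defs
  imports "HOL-Analysis.Analysis" "HOL-Library.Multiset"
begin

definition polygon :: "int \<Rightarrow> int list \<Rightarrow> real \<Rightarrow> real" where
  "polygon h ds x = (1 / real (length ds)) * (\<Sum>d\<leftarrow>ds. max 0 (x + real_of_int d - real_of_int h))"

text \<open>The class P_N: continuous convex piecewise linear functions on [0,h] with P(0) = 0,
  whose breakpoints have integral x-coordinates (i.e. P is affine on each [k,k+1], k integer)
  and whose slopes lie in (1/N)Z \<inter> [0,1].  Only the values on [0,h] matter.\<close>
definition polygon_class :: "int \<Rightarrow> nat \<Rightarrow> (real \<Rightarrow> real) set" where
  "polygon_class h N = {P.
     continuous_on {0..real_of_int h} P \<and>
     convex_on {0..real_of_int h} P \<and>
     P 0 = 0 \<and>
     (\<forall>k::int. 0 \<le> k \<and> k < h \<longrightarrow>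
        (\<exists>m::int. 0 \<le> real_of_int m / real N \<and> real_of_int m / real N \<le> 1 \<and>
           (\<forall>x\<in>{real_of_int k..real_of_int k + 1}.
               P x = P (real_of_int k) + (real_of_int m / real N) * (x - real_of_int k))))}"

end

theory Submission
  imports Defs
begin

definition cnt :: "int \<Rightarrow> int \<Rightarrow> int list \<Rightarrow> nat" where
  "cnt h k ds = length (filter (\<lambda>d. h - d \<le> k) ds)"

lemma term_step:
  fixes x :: real and h k d :: int
  assumes "real_of_int k \<le> x" "x \<le> real_of_int k + 1"
  shows "max 0 (x + real_of_int d - real_of_int h) = max 0 (real_of_int k + real_of_int d - real_of_int h) + (if h - d \<le> k then x - real_of_int k else 0)"
proof (cases "h - d \<le> k")
  case True
  hence "real_of_int h - real_of_int d \<le> real_of_int k" by (metis of_int_diff of_int_le_iff)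
  then show ?thesis using True assms by auto
next
  case False
  hence "real_of_int h - real_of_int d \<ge> real_of_int k + 1"
    by (metis add1_zle_eq not_le of_int_add of_int_diff of_int_le_iff of_int_1)
  then show ?thesis using False assms by auto
qed

lemma sum_step:
  fixes x :: real and h k :: int
  assumes "real_of_int k \<le> x" "x \<le> real_of_int k + 1"
  shows "(\<Sum>d\<leftarrow>ds. max 0 (x + real_of_int d - real_of_int h)) =
     (\<Sum>d\<leftarrow>ds. max 0 (real_of_int k + real_of_int d - real_of_int h)) + real (cnt h k ds) * (x - real_of_int k)"
proof (induction ds)
  case Nil then show ?case by (simp add: cnt_def)
next
  case (Cons d ds)
  show ?case using term_step[OF assms, of d h] Cons.IH by (simp add: cnt_def algebra_simps)
qed

lemma polygon_step:
  fixes x :: real and h k :: int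
  assumes "real_of_int k \<le> x" "x \<le> real_of_int k + 1"
  shows "polygon h ds x = polygon h ds (real_of_int k) + real (cnt h k ds) / real (length ds) * (x - real_of_int k)"
  unfolding polygon_def sum_step[OF assms] by (simp add: distrib_left)

lemma polygon_zero:
  assumes "set ds \<subseteq> {..h}"
  shows "polygon h ds 0 = 0"
proof -
  have "(\<Sum>d\<leftarrow>ds. max 0 (0 + real_of_int d - real_of_int h)) = 0"
    using assms by (induction ds) auto
  then show ?thesis unfolding polygon_def by simp
qed

lemma cont_sum: "continuous_on S (\<lambda>x::real. \<Sum>d\<leftarrow>ds. max 0 (x + real_of_int d - real_of_int h))"
  by (induction ds) (auto intro!: continuous_intros)

lemma convex_max: "convex S \<Longrightarrow> convex_on S (\<lambda>x::real. max 0 (x + c))"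
  unfolding convex_on_def
proof (intro conjI ballI allI impI)
  fix x y u v :: real
  assume "0 \<le> u" "0 \<le> v" "u + v = 1"
  moreover have "u * x + v * y + c = u * (x + c) + v * (y + c)" using \<open>u + v = 1\<close> by algebra
  moreover have "u * (x + c) \<le> u * max 0 (x + c)" "v * (y + c) \<le> v * max 0 (y + c)"
    using \<open>0 \<le> u\<close> \<open>0 \<le> v\<close> by (auto intro: mult_left_mono)
  ultimately show "max 0 (u *\<^sub>R x + v *\<^sub>R y + c) \<le> u * max 0 (x + c) + v * max 0 (y + c)"
    by auto
qed

lemma convex_sum: "convex S \<Longrightarrow> convex_on S (\<lambda>x::real. \<Sum>d\<leftarrow>ds. max 0 (x + real_of_int d - real_of_int h))"
proof (induction ds)
  case Nil then show ?case by (simp add: convex_on_const)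
next
  case (Cons d ds)
  have "convex_on S (\<lambda>x::real. max 0 (x + (real_of_int d - real_of_int h)))" using convex_max Cons by blast
  then show ?case using Cons by (auto simp: algebra_simps intro!: convex_on_add)
qed


lemma build:
  assumes "\<forall>j. M j \<le> M (Suc j)"
  shows "\<exists>cs::nat list. length cs = M n \<and> set cs \<subseteq> {..n} \<and> (\<forall>k\<le>n. length (filter (\<lambda>c. c \<le> k) cs) = M k)"
proof (induction n)
  case 0
  show ?case by (rule exI[of _ "replicate (M 0) 0"]) auto
next
  case (Suc n)
  then obtain cs where cs: "length cs = M n" "set cs \<subseteq> {..n}" "\<forall>k\<le>n. length (filter (\<lambda>c. c \<le> k) cs) = M k"
    by blast
  have mono: "M n \<le> M (Suc n)" using assms by blast
  show ?case
  proof (rule exI[of _ "cs @ replicate (M (Suc n) - M n) (Suc n)"], intro conjI allI impI)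
    show "length (cs @ replicate (M (Suc n) - M n) (Suc n)) = M (Suc n)" using cs mono by simp
    show "set (cs @ replicate (M (Suc n) - M n) (Suc n)) \<subseteq> {..Suc n}" using cs by auto
    fix k assume k: "k \<le> Suc n"
    show "length (filter (\<lambda>c. c \<le> k) (cs @ replicate (M (Suc n) - M n) (Suc n))) = M k"
    proof (cases "k \<le> n")
      case True
      have "filter (\<lambda>c. c \<le> k) (replicate (M (Suc n) - M n) (Suc n)) = []" using True by simp
      then show ?thesis using cs True by simp
    next
      case False
      hence "k = Suc n" using k by simp
      moreover have "filter (\<lambda>c. c \<le> Suc n) cs = cs" using cs(2) by (auto intro!: filter_True)
      ultimately show ?thesis using cs mono by simp
    qed
  qed
qed

lemma count_cnt:
  "int (count_list es v) = int (cnt h (h - v) es) - int (cnt h (h - v - 1) es)"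
  by (induction es) (auto simp: cnt_def)

lemma cnt_low: "set xs \<subseteq> {..h} \<Longrightarrow> k < 0 \<Longrightarrow> cnt h k xs = 0"
  unfolding cnt_def by (auto simp: filter_empty_conv)

lemma cnt_high: "set xs \<subseteq> {0..} \<Longrightarrow> k \<ge> h \<Longrightarrow> cnt h k xs = length xs"
  unfolding cnt_def by (subst filter_True) auto


theorem mainTheorem1:
  fixes h :: int and N :: nat
  assumes "h \<ge> 1" and "N \<ge> 1"
  shows "(\<forall>ds. length ds = N \<and> set ds \<subseteq> {0..h} \<longrightarrow> polygon h ds \<in> polygon_class h N)
    \<and> (\<forall>P \<in> polygon_class h N.
         \<exists>ds. length ds = N \<and> set ds \<subseteq> {0..h} \<and>
              (\<forall>x\<in>{0..real_of_int h}. P x = polygon h ds x) \<and>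
              (\<forall>es. length es = N \<and> set es \<subseteq> {0..h} \<and>
                    (\<forall>x\<in>{0..real_of_int h}. P x = polygon h es x) \<longrightarrow> mset es = mset ds))"
proof (intro conjI ballI allI impI)
  have Npos: "real N > 0" using assms by simp
  fix ds :: "int list" assume ds: "length ds = N \<and> set ds \<subseteq> {0..h}"
  show "polygon h ds \<in> polygon_class h N"
    unfolding polygon_class_def mem_Collect_eq
  proof (intro conjI allI impI)
    show "continuous_on {0..real_of_int h} (polygon h ds)"
      unfolding polygon_def by (intro continuous_on_mult continuous_on_const cont_sum)
    show "convex_on {0..real_of_int h} (polygon h ds)"
      unfolding polygon_def by (intro convex_on_cmul convex_sum) auto
    show "polygon h ds 0 = 0" using ds by (intro polygon_zero) auto
    fix k :: int assume k: "0 \<le> k \<and> k < h"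
    have le: "cnt h k ds \<le> N" using ds unfolding cnt_def by (metis length_filter_le)
    show "\<exists>m::int. 0 \<le> real_of_int m / real N \<and> real_of_int m / real N \<le> 1 \<and>
           (\<forall>x\<in>{real_of_int k..real_of_int k + 1}.
               polygon h ds x = polygon h ds (real_of_int k) + (real_of_int m / real N) * (x - real_of_int k))"
    proof (intro exI[of _ "int (cnt h k ds)"] conjI ballI)
      show "0 \<le> real_of_int (int (cnt h k ds)) / real N" by simp
      show "real_of_int (int (cnt h k ds)) / real N \<le> 1" using le Npos by simp
      fix x assume "x \<in> {real_of_int k..real_of_int k + 1}"
      then show "polygon h ds x = polygon h ds (real_of_int k) + real_of_int (int (cnt h k ds)) / real N * (x - real_of_int k)"
        using polygon_step[of k x h ds] ds by simp
    qed
  qed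
next
  have Npos: "real N > 0" using assms by simp
  fix P assume "P \<in> polygon_class h N"
  then have Pconv: "convex_on {0..real_of_int h} P" and P0: "P 0 = 0"
    and Paff: "\<forall>k::int. 0 \<le> k \<and> k < h \<longrightarrow> (\<exists>m::int. 0 \<le> real_of_int m / real N \<and> real_of_int m / real N \<le> 1 \<and>
           (\<forall>x\<in>{real_of_int k..real_of_int k + 1}.
               P x = P (real_of_int k) + (real_of_int m / real N) * (x - real_of_int k)))"
    unfolding polygon_class_def mem_Collect_eq by blast+
  have "\<forall>k::int. \<exists>m::int. 0 \<le> k \<and> k < h \<longrightarrow> (0 \<le> real_of_int m / real N \<and> real_of_int m / real N \<le> 1 \<and>
           (\<forall>x\<in>{real_of_int k..real_of_int k + 1}.
               P x = P (real_of_int k) + (real_of_int m / real N) * (x - real_of_int k)))"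
    using Paff by blast
  from choice[OF this] obtain m :: "int \<Rightarrow> int" where m0: "\<forall>k. 0 \<le> k \<and> k < h \<longrightarrow> (0 \<le> real_of_int (m k) / real N \<and> real_of_int (m k) / real N \<le> 1 \<and>
           (\<forall>x\<in>{real_of_int k..real_of_int k + 1}.
               P x = P (real_of_int k) + (real_of_int (m k) / real N) * (x - real_of_int k)))"
    by blast
  have m: "0 \<le> real_of_int (m k) / real N \<and> real_of_int (m k) / real N \<le> 1 \<and>
           (\<forall>x\<in>{real_of_int k..real_of_int k + 1}.
               P x = P (real_of_int k) + (real_of_int (m k) / real N) * (x - real_of_int k))"
    if "0 \<le> k" "k < h" for k
    using m0 that by blast
  have mb: "0 \<le> m k \<and> m k \<le> int N" if "0 \<le> k" "k < h" for k
  proof -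
    have "0 \<le> real_of_int (m k) / real N" "real_of_int (m k) / real N \<le> 1" using m[OF that] by blast+
    then have "0 \<le> real_of_int (m k)" "real_of_int (m k) \<le> real N" using Npos by (auto simp: divide_simps split: if_splits)
    then show ?thesis by linarith
  qed
  have mrec: "P (real_of_int k + 1) = P (real_of_int k) + real_of_int (m k) / real N" if "0 \<le> k" "k < h" for k
  proof -
    have "\<forall>x\<in>{real_of_int k..real_of_int k + 1}. P x = P (real_of_int k) + (real_of_int (m k) / real N) * (x - real_of_int k)"
      using m[OF that] by blast
    then have "P (real_of_int k + 1) = P (real_of_int k) + (real_of_int (m k) / real N) * (real_of_int k + 1 - real_of_int k)"
      by (rule bspec) simp
    then show ?thesis by simp
  qed
  have mmono: "m k \<le> m (k + 1)" if "0 \<le> k" "k + 1 < h" for k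
  proof -
    have conv: "P ((1 - 1/2) *\<^sub>R real_of_int k + (1/2) *\<^sub>R (real_of_int k + 2)) \<le> (1 - 1/2) * P (real_of_int k) + (1/2) * P (real_of_int k + 2)"
      using that by (intro convex_onD[OF Pconv]) auto
    have eq: "(1 - 1/2) *\<^sub>R real_of_int k + (1/2) *\<^sub>R (real_of_int k + 2) = real_of_int k + 1" by (simp add: field_simps)
    have A: "P (real_of_int k + 1) \<le> (1 - 1/2) * P (real_of_int k) + (1/2) * P (real_of_int k + 2)"
      using conv unfolding eq .
    have e2: "P (real_of_int k + 2) = P (real_of_int k + 1) + real_of_int (m (k+1)) / real N"
      using mrec[of "k+1"] that by (simp add: add.assoc)
    have e1: "P (real_of_int k + 1) = P (real_of_int k) + real_of_int (m k) / real N"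
      using mrec[of k] that by simp
    have lin: "\<And>p0 p1 p2 a b :: real. p1 \<le> (1 - 1/2) * p0 + (1/2) * p2 \<Longrightarrow> p1 = p0 + a \<Longrightarrow> p2 = p1 + b \<Longrightarrow> a \<le> b"
      by (simp add: field_simps)
    have "real_of_int (m k) / real N \<le> real_of_int (m (k+1)) / real N"
      using lin[OF A e1 e2] .
    then show ?thesis using Npos by (simp add: divide_le_cancel)
  qed
  define n where "n = nat h"
  define M where "M j = (if j < n then nat (m (int j)) else N)" for j
  have Mmono: "\<forall>j. M j \<le> M (Suc j)"
  proof
    fix j
    show "M j \<le> M (Suc j)"
    proof (cases "Suc j < n")
      case True
      then have "int j + 1 < h" using n_def by linarith
      then have "m (int j) \<le> m (int j + 1)" using mmono[of "int j"] by simp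
      then show ?thesis using True n_def unfolding M_def by (simp add: add.commute nat_mono)
    next
      case False
      show ?thesis
      proof (cases "j < n")
        case True
        then have "int j < h" using n_def by linarith
        then have "m (int j) \<le> int N" using mb[of "int j"] by simp
        then show ?thesis using True False unfolding M_def by (simp add: nat_le_iff)
      next
        case False
        then show ?thesis unfolding M_def by simp
      qed
    qed
  qed
  obtain cs where cs: "length cs = M n" "set cs \<subseteq> {..n}" "\<forall>k\<le>n. length (filter (\<lambda>c. c \<le> k) cs) = M k"
    using build[OF Mmono] by blast
  define ds where "ds = map (\<lambda>c. h - int c) cs"
  have dslen: "length ds = N" using cs(1) unfolding ds_def M_def by simp
  have dsset: "set ds \<subseteq> {0..h}" using cs(2) n_def assms unfolding ds_def by auto
  have dscnt: "real (cnt h k ds) = real_of_int (m k)" if "0 \<le> k" "k < h" for k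
  proof -
    have "cnt h k ds = length (filter (\<lambda>c. c \<le> nat k) cs)"
      unfolding cnt_def ds_def filter_map length_map o_def
      by (rule arg_cong[where f=length], rule filter_cong) (use that in auto)
    also have "\<dots> = M (nat k)" using cs(3) that n_def by simp
    also have "\<dots> = nat (m k)" using that n_def unfolding M_def by simp
    finally show ?thesis using mb[OF that] by simp
  qed
  have agree_int: "j \<le> n \<Longrightarrow> P (real j) = polygon h ds (real j)" for j
  proof (induction j)
    case 0
    have "set ds \<subseteq> {..h}" using dsset by auto
    then show ?case using P0 polygon_zero[of ds h] by simp
  next
    case (Suc j)
    have j: "0 \<le> int j" "int j < h" using Suc n_def by auto
    have "polygon h ds (real (Suc j)) = polygon h ds (real j) + real (cnt h (int j) ds) / real N"
      using polygon_step[of "int j" "real (Suc j)" h ds] dslen by simp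
    moreover have "P (real (Suc j)) = P (real j) + real_of_int (m (int j)) / real N"
      using mrec[OF j] by (simp add: add.commute)
    ultimately show ?case using Suc dscnt[OF j] by simp
  qed
  have agree: "\<forall>x\<in>{0..real_of_int h}. P x = polygon h ds x"
  proof
    fix x assume x: "x \<in> {0..real_of_int h}"
    define k where "k = floor x"
    show "P x = polygon h ds x"
    proof (cases "k < h")
      case False
      have "real_of_int k \<le> x" using k_def by simp
      moreover have "real_of_int h \<le> real_of_int k" using False by simp
      ultimately have "x = real_of_int h" using x by simp
      then have "x = real n" using n_def assms by simp
      then show ?thesis using agree_int[of n] by simp
    next
      case True
      have k0: "0 \<le> k" using x k_def by auto
      have kx: "real_of_int k \<le> x" "x \<le> real_of_int k + 1" using k_def by linarith+
      have "P x = P (real_of_int k) + (real_of_int (m k) / real N) * (x - real_of_int k)"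
        using m[OF k0 True] kx by (intro bspec[where x=x, OF conjunct2[OF conjunct2[OF m[OF k0 True]]]]) simp
      moreover have "polygon h ds x = polygon h ds (real_of_int k) + real (cnt h k ds) / real N * (x - real_of_int k)"
        using polygon_step[OF kx] dslen by simp
      moreover have "P (real_of_int k) = polygon h ds (real_of_int k)"
        using agree_int[of "nat k"] k0 True n_def by simp
      ultimately show ?thesis using dscnt[OF k0 True] by simp
    qed
  qed
  show "\<exists>ds. length ds = N \<and> set ds \<subseteq> {0..h} \<and>
              (\<forall>x\<in>{0..real_of_int h}. P x = polygon h ds x) \<and>
              (\<forall>es. length es = N \<and> set es \<subseteq> {0..h} \<and>
                    (\<forall>x\<in>{0..real_of_int h}. P x = polygon h es x) \<longrightarrow> mset es = mset ds)"
  proof (intro exI[of _ ds] conjI dslen dsset agree allI impI)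
    fix es assume es: "length es = N \<and> set es \<subseteq> {0..h} \<and> (\<forall>x\<in>{0..real_of_int h}. P x = polygon h es x)"
    have cnteq: "cnt h k es = cnt h k ds" for k
    proof (cases "k < 0")
      case True then show ?thesis using es dsset by (simp add: cnt_low subset_iff)
    next
      case False
      show ?thesis
      proof (cases "k < h")
        case False
        then show ?thesis using es dsset dslen by (simp add: cnt_high subset_iff)
      next
        case True
        have k0: "0 \<le> k" using False \<open>\<not> k < 0\<close> by simp
        have in1: "real_of_int k \<in> {0..real_of_int h}" "real_of_int k + 1 \<in> {0..real_of_int h}"
          using k0 True by auto
        have "polygon h es (real_of_int k + 1) = polygon h es (real_of_int k) + real (cnt h k es) / real N"
          using polygon_step[of k "real_of_int k + 1" h es] es by simp
        moreover have "polygon h ds (real_of_int k + 1) = polygon h ds (real_of_int k) + real (cnt h k ds) / real N"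
          using polygon_step[of k "real_of_int k + 1" h ds] dslen by simp
        moreover have "polygon h es (real_of_int k + 1) = polygon h ds (real_of_int k + 1)"
          "polygon h es (real_of_int k) = polygon h ds (real_of_int k)"
          using es agree in1 by auto
        ultimately have eq: "real (cnt h k es) / real N = real (cnt h k ds) / real N" by (simp only:)
        have "real (cnt h k es) = real (cnt h k ds)" using eq Npos by (metis divide_cancel_right less_irrefl)
        then show ?thesis by simp
      qed
    qed
    show "mset es = mset ds"
    proof (rule multiset_eqI)
      fix v
      have "int (count_list es v) = int (count_list ds v)" using count_cnt[of es v h] count_cnt[of ds v h] cnteq by simp
      then show "count (mset es) v = count (mset ds) v" by (simp add: count_mset)
    qed
  qed
qed

end
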